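(* Let $k$ be a field of characteristic $0$, $R=k[x_1,\dots,x_n]$, $\ell=x_1+\dots+x_n$, let $d_1,\dots,d_{n+1}$ be positive integers and $G=(x_1^{d_1},\dots,x_n^{d_n})\colon(\ell^{d_{n+1}})$. Then $R/G$ has the strong Lefschetz property.
   Context: A graded Artinian $k$-algebra $A$ has the strong Lefschetz property if there exists $\ell\in A_1$ such that for all $i$ and $j\ge0$ the multiplication map $\cdot\ell^j\colon A_i\to A_{i+j}$ is injective or surjective. *)

theory Defs
  imports "HOL-Library.Poly_Mapping"
begin

text \<open>Polynomial ring R = k[x_i : i in 'n] (variables indexed by a finite type 'n,
  so n = CARD('n)), represented as finitely supported maps from monomials
  (exponent vectors, finitely supported maps from 'n to nat) to coefficients.\<close>
type_synonym ('n, 'a) mpoly = "('n \<Rightarrow>\<^sub>0 nat) \<Rightarrow>\<^sub>0 'a"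

definition var :: "'n \<Rightarrow> ('n, 'a::comm_ring_1) mpoly" where
  "var i = Poly_Mapping.single (Poly_Mapping.single i 1) 1"

definition mdeg :: "('n \<Rightarrow>\<^sub>0 nat) \<Rightarrow> nat" where
  "mdeg m = (\<Sum>i\<in>Poly_Mapping.keys m. Poly_Mapping.lookup m i)"

definition homog :: "nat \<Rightarrow> ('n, 'a::comm_ring_1) mpoly set" where
  "homog d = {f. \<forall>m\<in>Poly_Mapping.keys f. mdeg m = d}"

definition gen_ideal :: "('n::finite \<Rightarrow> ('n, 'a::comm_ring_1) mpoly) \<Rightarrow> ('n, 'a) mpoly set" where
  "gen_ideal g = {f. \<exists>c. f = (\<Sum>i\<in>UNIV. c i * g i)}"

definition colon :: "('n, 'a::comm_ring_1) mpoly set \<Rightarrow> ('n, 'a) mpoly \<Rightarrow> ('n, 'a) mpoly set" where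
  "colon I h = {f. f * h \<in> I}"

text \<open>Strong Lefschetz property of the graded algebra R/G for a homogeneous ideal G:
  there is a linear form L (representing an element of A_1) such that for all i, j,
  the map A_i \<rightarrow> A_{i+j}, [f] \<mapsto> [L^j f] is injective or surjective.
  Here A_i = R_i / (G \<inter> R_i).\<close>
definition strong_lefschetz :: "('n, 'a::comm_ring_1) mpoly set \<Rightarrow> bool" where
  "strong_lefschetz G \<longleftrightarrow>
     (\<exists>L\<in>homog 1. \<forall>i j.
        (\<forall>f\<in>homog i. L ^ j * f \<in> G \<longrightarrow> f \<in> G) \<or>
        (\<forall>g\<in>homog (i + j). \<exists>f\<in>homog i. g - L ^ j * f \<in> G))"

end

theory Submission
  imports Defs "HOL-Library.FuncSet"
begin


definition box :: "('n::finite \<Rightarrow> nat) \<Rightarrow> ('n \<Rightarrow>\<^sub>0 nat) set" where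
  "box d = {a. \<forall>i. Poly_Mapping.lookup a i < d i}"

lemma finite_box: "finite (box (d::'n::finite \<Rightarrow> nat))"
proof -
  have "box d = Poly_Mapping.lookup -` (PiE UNIV (\<lambda>i. {..<d i}) :: ('n \<Rightarrow> nat) set)"
    by (auto simp: box_def PiE_iff)
  moreover have "finite (Poly_Mapping.lookup -` (PiE UNIV (\<lambda>i. {..<d i}) :: ('n \<Rightarrow> nat) set))"
  proof (rule finite_vimageI)
    show "finite (PiE UNIV (\<lambda>i. {..<d i}) :: ('n \<Rightarrow> nat) set)"
      by (intro finite_PiE) auto
    show "inj Poly_Mapping.lookup"
      by (rule injI) simp
  qed
  ultimately show ?thesis by simp
qed

definition mk :: "('n::finite \<Rightarrow> nat) \<Rightarrow> (('n \<Rightarrow>\<^sub>0 nat) \<Rightarrow> 'a::zero) \<Rightarrow> ('n \<Rightarrow>\<^sub>0 nat) \<Rightarrow>\<^sub>0 'a" where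
  "mk d c = Abs_poly_mapping (\<lambda>a. if a \<in> box d then c a else 0)"

lemma lookup_mk: "Poly_Mapping.lookup (mk d c) a = (if a \<in> box d then c a else 0)"
proof -
  have "finite {a. (if a \<in> box d then c a else 0) \<noteq> 0}"
    by (rule finite_subset[OF _ finite_box[of d]]) (auto split: if_splits)
  then show ?thesis by (simp add: mk_def)
qed

definition sm :: "'a::field \<Rightarrow> ('n, 'a) mpoly \<Rightarrow> ('n, 'a) mpoly" where
  "sm c f = Abs_poly_mapping (\<lambda>a. c * Poly_Mapping.lookup f a)"

lemma lookup_sm: "Poly_Mapping.lookup (sm c f) a = c * Poly_Mapping.lookup f a"
proof -
  have "finite {a. c * Poly_Mapping.lookup f a \<noteq> 0}"
    by (rule finite_subset[OF _ finite_lookup[of f]]) auto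
  then show ?thesis by (simp add: sm_def)
qed

lemma mdeg_sum: "mdeg (a::'n::finite \<Rightarrow>\<^sub>0 nat) = (\<Sum>i\<in>UNIV. Poly_Mapping.lookup a i)"
  unfolding mdeg_def
  by (rule sum.mono_neutral_left) (auto simp: in_keys_iff)

lemma lookup_minus_single: "Poly_Mapping.lookup ((b::'n \<Rightarrow>\<^sub>0 nat) - Poly_Mapping.single i c) j = Poly_Mapping.lookup b j - (if i = j then c else 0)"
  by (simp add: lookup_minus lookup_single when_def)

lemma lookup_plus_single: "Poly_Mapping.lookup ((b::'n \<Rightarrow>\<^sub>0 nat) + Poly_Mapping.single i c) j = Poly_Mapping.lookup b j + (if i = j then c else 0)"
  by (simp add: lookup_add lookup_single when_def)

lemma mdeg_plus_single: "mdeg ((b::'n::finite \<Rightarrow>\<^sub>0 nat) + Poly_Mapping.single i 1) = mdeg b + 1"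
proof -
  have "mdeg (b + Poly_Mapping.single i 1) = (\<Sum>j\<in>UNIV. Poly_Mapping.lookup b j + (if i = j then 1 else 0))"
    unfolding mdeg_sum by (intro sum.cong) (simp_all add: lookup_plus_single)
  also have "\<dots> = mdeg b + 1" by (simp add: sum.distrib mdeg_sum)
  finally show ?thesis .
qed

lemma minus_plus_single: "1 \<le> Poly_Mapping.lookup (b::'n \<Rightarrow>\<^sub>0 nat) i \<Longrightarrow> (b - Poly_Mapping.single i 1) + Poly_Mapping.single i 1 = b"
  by (rule poly_mapping_eqI) (auto simp add: lookup_plus_single lookup_minus_single le_add_diff_inverse2)

lemma mdeg_minus_single: "1 \<le> Poly_Mapping.lookup b i \<Longrightarrow> mdeg ((b::'n::finite \<Rightarrow>\<^sub>0 nat) - Poly_Mapping.single i 1) + 1 = mdeg b"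
  by (metis mdeg_plus_single minus_plus_single)



lemma lookup_single_mult:
  "Poly_Mapping.lookup (Poly_Mapping.single m (1::'a::comm_ring_1) * f) b = (\<Sum>q. Poly_Mapping.lookup f q when b = m + q)"
proof -
  have "Poly_Mapping.lookup (Poly_Mapping.single m (1::'a) * f) b =
     (\<Sum>l. (1 when m = l) * (\<Sum>q. Poly_Mapping.lookup f q when b = l + q))"
    by (simp add: lookup_mult lookup_single)
  also have "\<dots> = (\<Sum>l. ((\<Sum>q. Poly_Mapping.lookup f q when b = l + q) when l = m))"
    by (intro Sum_any.cong) (auto simp: when_def)
  also have "\<dots> = (\<Sum>q. Poly_Mapping.lookup f q when b = m + q)" by simp
  finally show ?thesis .
qed

lemma lookup_var_mult:
  "Poly_Mapping.lookup (var i * (f::('n,'a::comm_ring_1) mpoly)) b =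
     (if 1 \<le> Poly_Mapping.lookup b i then Poly_Mapping.lookup f (b - Poly_Mapping.single i 1) else 0)"
proof -
  have "Poly_Mapping.lookup (var i * f) b = (\<Sum>q. Poly_Mapping.lookup f q when b = Poly_Mapping.single i 1 + q)"
    unfolding var_def by (rule lookup_single_mult)
  also have "\<dots> = (\<Sum>q. Poly_Mapping.lookup f q when (1 \<le> Poly_Mapping.lookup b i \<and> q = b - Poly_Mapping.single i 1))"
  proof (intro Sum_any.cong)
    fix q
    have "(b = Poly_Mapping.single i 1 + q) \<longleftrightarrow> (1 \<le> Poly_Mapping.lookup b i \<and> q = b - Poly_Mapping.single i 1)"
    proof
      assume h: "b = Poly_Mapping.single i 1 + q"
      then have "Poly_Mapping.lookup b i = Poly_Mapping.lookup q i + 1"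
        by (simp add: lookup_add)
      moreover have "q = b - Poly_Mapping.single i 1"
        by (rule poly_mapping_eqI) (simp add: h lookup_minus_single lookup_add)
      ultimately show "1 \<le> Poly_Mapping.lookup b i \<and> q = b - Poly_Mapping.single i 1" by simp
    next
      assume "1 \<le> Poly_Mapping.lookup b i \<and> q = b - Poly_Mapping.single i 1"
      then show "b = Poly_Mapping.single i 1 + q"
        using minus_plus_single[of b i] by (simp add: add.commute)
    qed
    then show "(Poly_Mapping.lookup f q when b = Poly_Mapping.single i 1 + q) =
      (Poly_Mapping.lookup f q when (1 \<le> Poly_Mapping.lookup b i \<and> q = b - Poly_Mapping.single i 1))" by simp
  qed
  also have "\<dots> = (if 1 \<le> Poly_Mapping.lookup b i then Poly_Mapping.lookup f (b - Poly_Mapping.single i 1) else 0)"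
    by (cases "1 \<le> Poly_Mapping.lookup b i") simp_all
  finally show ?thesis .
qed



definition trunc :: "('n::finite \<Rightarrow> nat) \<Rightarrow> ('n,'a::comm_ring_1) mpoly \<Rightarrow> ('n,'a) mpoly" where
  "trunc d f = mk d (Poly_Mapping.lookup f)"

definition Eop :: "('n::finite \<Rightarrow> nat) \<Rightarrow> ('n,'a::comm_ring_1) mpoly \<Rightarrow> ('n,'a) mpoly" where
  "Eop d f = mk d (\<lambda>b. \<Sum>i\<in>UNIV. if 1 \<le> Poly_Mapping.lookup b i
       then Poly_Mapping.lookup f (b - Poly_Mapping.single i 1) else 0)"

definition cf :: "('n \<Rightarrow> nat) \<Rightarrow> 'n \<Rightarrow> ('n \<Rightarrow>\<^sub>0 nat) \<Rightarrow> 'a::comm_ring_1" where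
  "cf d j b = of_nat (Poly_Mapping.lookup b j + 1) * (of_nat (d j) - of_nat (Poly_Mapping.lookup b j + 1))"

definition Fop :: "('n::finite \<Rightarrow> nat) \<Rightarrow> ('n,'a::comm_ring_1) mpoly \<Rightarrow> ('n,'a) mpoly" where
  "Fop d f = mk d (\<lambda>b. \<Sum>j\<in>UNIV. cf d j b * Poly_Mapping.lookup f (b + Poly_Mapping.single j 1))"

definition red :: "('n::finite \<Rightarrow> nat) \<Rightarrow> ('n,'a::comm_ring_1) mpoly \<Rightarrow> bool" where
  "red d f \<longleftrightarrow> (\<forall>a. Poly_Mapping.lookup f a \<noteq> 0 \<longrightarrow> a \<in> box d)"

definition wt :: "('n::finite \<Rightarrow> nat) \<Rightarrow> nat \<Rightarrow> 'a::comm_ring_1" where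
  "wt d m = 2 * of_nat m - (\<Sum>i\<in>UNIV. of_nat (d i) - 1)"

lemma homog_iff: "f \<in> homog m \<longleftrightarrow> (\<forall>a. Poly_Mapping.lookup f a \<noteq> 0 \<longrightarrow> mdeg a = m)"
  by (auto simp: homog_def in_keys_iff)

lemma red_mk: "red d (mk d c)"
  by (simp add: red_def lookup_mk)

lemma lookup_red: "red d f \<Longrightarrow> a \<notin> box d \<Longrightarrow> Poly_Mapping.lookup f a = 0"
  by (auto simp: red_def)

lemma box_minus: "b \<in> box d \<Longrightarrow> b - Poly_Mapping.single i c \<in> box d"
  unfolding box_def by (auto simp: lookup_minus_single) (meson le_less_trans diff_le_self)

lemma box_plus: "b \<in> box d \<Longrightarrow> b + Poly_Mapping.single j 1 \<notin> box d \<Longrightarrow> Poly_Mapping.lookup b j + 1 = d j"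
  unfolding box_def by (auto simp: lookup_plus_single split: if_splits)
    (metis Suc_eq_plus1 Suc_lessI)

lemma cf_zero: "b \<in> box d \<Longrightarrow> b + Poly_Mapping.single j 1 \<notin> box d \<Longrightarrow> cf d j b = 0"
  using box_plus[of b d j] by (simp add: cf_def)

lemma trunc_red: "red d f \<Longrightarrow> trunc d f = f"
  by (rule poly_mapping_eqI) (auto simp: trunc_def lookup_mk red_def)

lemma red_trunc: "red d (trunc d f)"
  by (simp add: trunc_def red_mk)

lemma trunc_diff: "trunc d (f - g) = trunc d f - trunc d g"
  by (rule poly_mapping_eqI) (simp add: trunc_def lookup_mk lookup_minus)

lemma trunc_homog: "f \<in> homog m \<Longrightarrow> trunc d f \<in> homog m"
  by (auto simp: homog_iff trunc_def lookup_mk split: if_splits)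

lemma lookup_ell_mult:
  "Poly_Mapping.lookup ((\<Sum>i\<in>UNIV. var i) * (f::('n::finite,'a::comm_ring_1) mpoly)) b =
   (\<Sum>i\<in>UNIV. if 1 \<le> Poly_Mapping.lookup b i then Poly_Mapping.lookup f (b - Poly_Mapping.single i 1) else 0)"
  by (simp add: sum_distrib_right lookup_sum lookup_var_mult)

lemma trunc_ell: "trunc d ((\<Sum>i\<in>UNIV. var i) * f) = Eop d (trunc d f)"
proof (rule poly_mapping_eqI)
  fix b
  show "Poly_Mapping.lookup (trunc d ((\<Sum>i\<in>UNIV. var i) * f)) b = Poly_Mapping.lookup (Eop d (trunc d f)) b"
  proof (cases "b \<in> box d")
    case True
    then show ?thesis
      unfolding trunc_def Eop_def lookup_mk lookup_ell_mult
      by (auto intro!: sum.cong simp: lookup_mk box_minus)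
  qed (simp add: trunc_def Eop_def lookup_mk)
qed

lemma trunc_ellpow: "trunc d ((\<Sum>i\<in>UNIV. var i) ^ k * f) = (Eop d ^^ k) (trunc d f)"
proof (induction k)
  case (Suc k)
  have "trunc d ((\<Sum>i\<in>UNIV. var i) ^ Suc k * f) = trunc d ((\<Sum>i\<in>UNIV. var i) * ((\<Sum>i\<in>UNIV. var i) ^ k * f))"
    by (simp add: mult.assoc)
  also have "\<dots> = Eop d (trunc d ((\<Sum>i\<in>UNIV. var i) ^ k * f))" by (rule trunc_ell)
  finally show ?case using Suc by simp
qed simp

lemma Eop_diff: "Eop d (f - g) = Eop d f - Eop d g"
  by (rule poly_mapping_eqI) (simp add: Eop_def lookup_mk lookup_minus sum_subtractf[symmetric] if_distrib cong: if_cong)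

lemma Eop_add: "Eop d (f + g) = Eop d f + Eop d g"
  by (rule poly_mapping_eqI) (simp add: Eop_def lookup_mk lookup_add sum.distrib[symmetric] if_distrib cong: if_cong)

lemma Eop_sm: "Eop d (sm c f) = sm c (Eop d f)"
  by (rule poly_mapping_eqI) (simp add: Eop_def lookup_mk lookup_sm sum_distrib_left if_distrib cong: if_cong)

lemma Fop_diff: "Fop d (f - g) = Fop d f - Fop d g"
  by (rule poly_mapping_eqI) (simp add: Fop_def lookup_mk lookup_minus sum_subtractf[symmetric] right_diff_distrib)

lemma Fop_sm: "Fop d (sm c f) = sm c (Fop d f)"
  by (rule poly_mapping_eqI) (simp add: Fop_def lookup_mk lookup_sm sum_distrib_left ac_simps)

lemma red_Eop: "red d (Eop d f)"
  by (simp add: Eop_def red_mk)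

lemma red_Fop: "red d (Fop d f)"
  by (simp add: Fop_def red_mk)

lemma red_sm: "red d f \<Longrightarrow> red d (sm c f)"
  by (simp add: red_def lookup_sm)

lemma homog_sm: "f \<in> homog m \<Longrightarrow> sm c f \<in> homog m"
  by (simp add: homog_iff lookup_sm)

lemma Eop_homog: "f \<in> homog m \<Longrightarrow> Eop d f \<in> homog (Suc m)"
proof (unfold homog_iff, intro allI impI)
  fix b assume f: "\<forall>a. Poly_Mapping.lookup f a \<noteq> 0 \<longrightarrow> mdeg a = m"
    and ne: "Poly_Mapping.lookup (Eop d f) b \<noteq> 0"
  have "(\<Sum>i\<in>UNIV. if 1 \<le> Poly_Mapping.lookup b i
       then Poly_Mapping.lookup f (b - Poly_Mapping.single i 1) else 0) \<noteq> 0"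
    using ne by (simp add: Eop_def lookup_mk split: if_splits)
  then obtain i where "(if 1 \<le> Poly_Mapping.lookup b i
       then Poly_Mapping.lookup f (b - Poly_Mapping.single i 1) else 0) \<noteq> 0"
    by (rule sum.not_neutral_contains_not_neutral)
  then have "1 \<le> Poly_Mapping.lookup b i" "Poly_Mapping.lookup f (b - Poly_Mapping.single i 1) \<noteq> 0"
    by (simp_all split: if_splits)
  then show "mdeg b = Suc m" using f mdeg_minus_single[of b i] by force
qed

lemma Fop_homog: "f \<in> homog m \<Longrightarrow> Poly_Mapping.lookup (Fop d f) b \<noteq> 0 \<Longrightarrow> mdeg b + 1 = m"
proof -
  assume f: "f \<in> homog m" and ne: "Poly_Mapping.lookup (Fop d f) b \<noteq> 0"
  have "(\<Sum>j\<in>UNIV. cf d j b * Poly_Mapping.lookup f (b + Poly_Mapping.single j 1)) \<noteq> 0"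
    using ne by (simp add: Fop_def lookup_mk split: if_splits)
  then obtain j where "cf d j b * Poly_Mapping.lookup f (b + Poly_Mapping.single j 1) \<noteq> 0"
    by (rule sum.not_neutral_contains_not_neutral)
  then have "Poly_Mapping.lookup f (b + Poly_Mapping.single j 1) \<noteq> 0" by auto
  then show "mdeg b + 1 = m" using f mdeg_plus_single[of b j] by (auto simp: homog_iff)
qed

lemma Fop_homog': "f \<in> homog m \<Longrightarrow> Fop d f \<in> homog (m - 1)"
  using Fop_homog[of f m d] by (force simp: homog_iff)

lemma Fop_homog0: "f \<in> homog 0 \<Longrightarrow> Fop d f = 0"
  using Fop_homog[of f 0 d] by (auto simp: poly_mapping_eq_iff fun_eq_iff)



lemma cf_minus_other: "i \<noteq> j \<Longrightarrow> cf d j (b - Poly_Mapping.single i 1) = cf d j b"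
  by (simp add: cf_def lookup_minus_single)

lemma cf_minus_same: "1 \<le> Poly_Mapping.lookup b i \<Longrightarrow>
   cf d i (b - Poly_Mapping.single i 1) = (of_nat (Poly_Mapping.lookup b i) * (of_nat (d i) - of_nat (Poly_Mapping.lookup b i)) :: 'a::comm_ring_1)"
  by (simp add: cf_def lookup_minus_single)

lemma swap_single: "i \<noteq> j \<Longrightarrow> 1 \<le> Poly_Mapping.lookup b i \<Longrightarrow>
  b - Poly_Mapping.single i 1 + Poly_Mapping.single j 1 = b + Poly_Mapping.single j 1 - Poly_Mapping.single i (1::nat)"
  by (rule poly_mapping_eqI) (auto simp: lookup_minus_single lookup_plus_single)

lemma plus_minus_single: "(b::'n \<Rightarrow>\<^sub>0 nat) + Poly_Mapping.single i c - Poly_Mapping.single i c = b"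
  by (rule poly_mapping_eqI) (auto simp: lookup_minus_single lookup_plus_single)

lemma term_id:
  fixes f :: "('n::finite,'a::comm_ring_1) mpoly"
  shows "(if 1 \<le> Poly_Mapping.lookup b i then cf d j (b - Poly_Mapping.single i 1) *
           Poly_Mapping.lookup f (b - Poly_Mapping.single i 1 + Poly_Mapping.single j 1) else 0)
   - cf d j b * (if 1 \<le> Poly_Mapping.lookup (b + Poly_Mapping.single j 1) i
           then Poly_Mapping.lookup f (b + Poly_Mapping.single j 1 - Poly_Mapping.single i 1) else 0)
   = (if i = j then (2 * of_nat (Poly_Mapping.lookup b i) - of_nat (d i) + 1) * Poly_Mapping.lookup f b else 0)"
proof (cases "i = j")
  case True
  show ?thesis
  proof (cases "1 \<le> Poly_Mapping.lookup b i")
    case h: True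
    have j: "j = i" using True by simp
    have e1: "b - Poly_Mapping.single i 1 + Poly_Mapping.single i 1 = b"
      using minus_plus_single[OF h] .
    have e2: "1 \<le> Poly_Mapping.lookup (b + Poly_Mapping.single i 1) i"
      by (simp add: lookup_plus_single)
    have e3: "b + Poly_Mapping.single i 1 - Poly_Mapping.single i 1 = b"
      by (rule plus_minus_single)
    have X: "(if 1 \<le> Poly_Mapping.lookup b i then cf d i (b - Poly_Mapping.single i 1) *
           Poly_Mapping.lookup f (b - Poly_Mapping.single i 1 + Poly_Mapping.single i 1) else 0)
       - cf d i b * (if 1 \<le> Poly_Mapping.lookup (b + Poly_Mapping.single i 1) i
           then Poly_Mapping.lookup f (b + Poly_Mapping.single i 1 - Poly_Mapping.single i 1) else 0)
       = (2 * of_nat (Poly_Mapping.lookup b i) - of_nat (d i) + 1) * Poly_Mapping.lookup f b"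
      by (simp only: h e1 e2 e3 cf_minus_same[OF h] if_True) (simp add: cf_def algebra_simps)
    from X show ?thesis unfolding j by (simp only: simp_thms if_True)
  next
    case h: False
    then have "Poly_Mapping.lookup b i = 0" by simp
    then show ?thesis using True h
      by (simp add: plus_minus_single lookup_plus_single cf_def algebra_simps)
  qed
next
  case False
  show ?thesis
  proof (cases "1 \<le> Poly_Mapping.lookup b i")
    case h: True
    have e1: "cf d j (b - Poly_Mapping.single i 1) = (cf d j b :: 'a)" using cf_minus_other[OF False] .
    have e2: "b - Poly_Mapping.single i 1 + Poly_Mapping.single j 1 = b + Poly_Mapping.single j 1 - Poly_Mapping.single i 1"
      using swap_single[OF False h] .
    have e3: "1 \<le> Poly_Mapping.lookup (b + Poly_Mapping.single j 1) i"
      using h False by (simp add: lookup_plus_single)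
    show ?thesis using False
      by (simp only: e1 e2 e3 h if_True if_False simp_thms) simp
  next
    case h: False
    show ?thesis using False h
      by (simp add: lookup_plus_single)
  qed
qed

lemma of_nat_mdeg: "of_nat (mdeg b) = (\<Sum>i\<in>UNIV. of_nat (Poly_Mapping.lookup (b::'n::finite \<Rightarrow>\<^sub>0 nat) i) :: 'a::comm_ring_1)"
  by (simp add: mdeg_sum)

lemma commutator:
  fixes f :: "('n::finite,'a::field) mpoly"
  assumes red: "red d f" and hom: "f \<in> homog m"
  shows "Eop d (Fop d f) - Fop d (Eop d f) = sm (wt d m) f"
proof (rule poly_mapping_eqI)
  fix b
  show "Poly_Mapping.lookup (Eop d (Fop d f) - Fop d (Eop d f)) b = Poly_Mapping.lookup (sm (wt d m) f) b"
  proof (cases "b \<in> box d")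
    case False
    then show ?thesis using lookup_red[OF red False]
      by (simp add: lookup_minus lookup_sm Eop_def Fop_def lookup_mk)
  next
    case bb: True
    have L: "Poly_Mapping.lookup (Eop d (Fop d f)) b =
      (\<Sum>i\<in>UNIV. \<Sum>j\<in>UNIV. if 1 \<le> Poly_Mapping.lookup b i then cf d j (b - Poly_Mapping.single i 1) *
           Poly_Mapping.lookup f (b - Poly_Mapping.single i 1 + Poly_Mapping.single j 1) else 0)"
      unfolding Eop_def lookup_mk using bb
      by (auto intro!: sum.cong simp: Fop_def lookup_mk box_minus)
    have R: "Poly_Mapping.lookup (Fop d (Eop d f)) b =
      (\<Sum>i\<in>UNIV. \<Sum>j\<in>UNIV. cf d j b * (if 1 \<le> Poly_Mapping.lookup (b + Poly_Mapping.single j 1) i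
           then Poly_Mapping.lookup f (b + Poly_Mapping.single j 1 - Poly_Mapping.single i 1) else 0))"
    proof -
      have "Poly_Mapping.lookup (Fop d (Eop d f)) b =
        (\<Sum>j\<in>UNIV. \<Sum>i\<in>UNIV. cf d j b * (if 1 \<le> Poly_Mapping.lookup (b + Poly_Mapping.single j 1) i
           then Poly_Mapping.lookup f (b + Poly_Mapping.single j 1 - Poly_Mapping.single i 1) else 0))"
        unfolding Fop_def lookup_mk if_P[OF bb] sum_distrib_left[symmetric]
      proof (intro sum.cong refl)
        fix j
        show "cf d j b * Poly_Mapping.lookup (Eop d f) (b + Poly_Mapping.single j 1) =
          cf d j b * (\<Sum>i\<in>UNIV. if 1 \<le> Poly_Mapping.lookup (b + Poly_Mapping.single j 1) i
           then Poly_Mapping.lookup f (b + Poly_Mapping.single j 1 - Poly_Mapping.single i 1) else 0)"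
        proof (cases "b + Poly_Mapping.single j 1 \<in> box d")
          case True
          then show ?thesis by (simp only: Eop_def lookup_mk if_P)
        next
          case False
          then show ?thesis by (simp add: cf_zero[OF bb False])
        qed
      qed
      also have "\<dots> = (\<Sum>i\<in>UNIV. \<Sum>j\<in>UNIV. cf d j b * (if 1 \<le> Poly_Mapping.lookup (b + Poly_Mapping.single j 1) i
           then Poly_Mapping.lookup f (b + Poly_Mapping.single j 1 - Poly_Mapping.single i 1) else 0))"
        by (rule sum.swap)
      finally show ?thesis .
    qed
    have "Poly_Mapping.lookup (Eop d (Fop d f) - Fop d (Eop d f)) b =
      (\<Sum>i\<in>UNIV. \<Sum>j\<in>UNIV. (if i = j then (2 * of_nat (Poly_Mapping.lookup b i) - of_nat (d i) + 1) * Poly_Mapping.lookup f b else 0))"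
      unfolding lookup_minus L R sum_subtractf[symmetric] term_id ..
    also have "\<dots> = (\<Sum>i\<in>UNIV. (2 * of_nat (Poly_Mapping.lookup b i) - of_nat (d i) + 1) * Poly_Mapping.lookup f b)"
      by simp
    also have "\<dots> = wt d m * Poly_Mapping.lookup f b"
    proof (cases "Poly_Mapping.lookup f b = 0")
      case False
      then have "mdeg b = m" using hom by (simp add: homog_iff)
      then have "(\<Sum>i\<in>UNIV. (2 * of_nat (Poly_Mapping.lookup b i) - of_nat (d i) + 1 :: 'a)) = wt d m"
        unfolding wt_def
        by (simp add: of_nat_mdeg[where 'a='a, symmetric] sum.distrib sum_subtractf sum_distrib_left[symmetric] algebra_simps)
      then show ?thesis by (simp add: sum_distrib_right[symmetric])
    qed simp
    finally show ?thesis by (simp add: lookup_sm)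
  qed
qed



definition DD :: "('n::finite \<Rightarrow> nat) \<Rightarrow> nat" where
  "DD d = (\<Sum>i\<in>UNIV. d i - 1)"

definition VV :: "('n::finite \<Rightarrow> nat) \<Rightarrow> nat \<Rightarrow> ('n,'a::comm_ring_1) mpoly set" where
  "VV d m = {f. red d f \<and> f \<in> homog m}"

lemma sm_one[simp]: "sm 1 f = f"
  by (rule poly_mapping_eqI) (simp add: lookup_sm)

lemma sm_sm[simp]: "sm a (sm b f) = sm (a * b) f"
  by (rule poly_mapping_eqI) (simp add: lookup_sm)

lemma sm_zero[simp]: "sm a 0 = 0"
  by (rule poly_mapping_eqI) (simp add: lookup_sm)

lemma sm_diff: "sm a (f - g) = sm a f - sm a g"
  by (rule poly_mapping_eqI) (simp add: lookup_sm lookup_minus algebra_simps)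

lemma sm_eq0: "sm a f = 0 \<Longrightarrow> a \<noteq> 0 \<Longrightarrow> f = 0"
  by (auto simp: poly_mapping_eq_iff fun_eq_iff lookup_sm)

lemma sm_add_scalar: "sm a f + sm b f = sm (a + b) f"
  by (rule poly_mapping_eqI) (simp add: lookup_sm lookup_add algebra_simps)

lemma Eop_zero[simp]: "Eop d 0 = 0"
  using Eop_diff[of d 0 0] by simp

lemma Fop_zero[simp]: "Fop d 0 = 0"
  using Fop_diff[of d 0 0] by simp

lemma Epow_diff: "(Eop d ^^ k) (f - g) = (Eop d ^^ k) f - (Eop d ^^ k) g"
  by (induction k) (simp_all add: Eop_diff)

lemma Epow_add: "(Eop d ^^ k) (f + g) = (Eop d ^^ k) f + (Eop d ^^ k) g"
  by (induction k) (simp_all add: Eop_add)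

lemma Epow_sm: "(Eop d ^^ k) (sm c f) = sm c ((Eop d ^^ k) f)"
  by (induction k) (simp_all add: Eop_sm)

lemma Epow_zero[simp]: "(Eop d ^^ k) 0 = 0"
  by (induction k) simp_all

lemma Fpow_zero[simp]: "(Fop d ^^ k) 0 = 0"
  by (induction k) simp_all

lemma Fpow_sm: "(Fop d ^^ k) (sm c f) = sm c ((Fop d ^^ k) f)"
  by (induction k) (simp_all add: Fop_sm)

lemma homog_diff: "f \<in> homog m \<Longrightarrow> g \<in> homog m \<Longrightarrow> f - g \<in> homog m"
  by (simp add: homog_iff lookup_minus) metis

lemma homog_add: "f \<in> homog m \<Longrightarrow> g \<in> homog m \<Longrightarrow> f + g \<in> homog m"
  by (simp add: homog_iff lookup_add) (metis add_0)

lemma red_diff: "red d f \<Longrightarrow> red d g \<Longrightarrow> red d (f - g)"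
  by (simp add: red_def lookup_minus) metis

lemma red_add: "red d f \<Longrightarrow> red d g \<Longrightarrow> red d (f + g)"
  by (simp add: red_def lookup_add) (metis add_0)

lemma zero_VV[simp]: "0 \<in> VV d m"
  by (simp add: VV_def red_def homog_iff)

lemma VV_diff: "f \<in> VV d m \<Longrightarrow> g \<in> VV d m \<Longrightarrow> f - g \<in> VV d m"
  by (simp add: VV_def red_diff homog_diff)

lemma VV_add: "f \<in> VV d m \<Longrightarrow> g \<in> VV d m \<Longrightarrow> f + g \<in> VV d m"
  by (simp add: VV_def red_add homog_add)

lemma VV_sm: "f \<in> VV d m \<Longrightarrow> sm c f \<in> VV d m"
  by (simp add: VV_def red_sm homog_sm)

lemma Eop_VV: "f \<in> VV d m \<Longrightarrow> Eop d f \<in> VV d (Suc m)"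
  by (simp add: VV_def red_Eop Eop_homog)

lemma Epow_VV: "f \<in> VV d m \<Longrightarrow> (Eop d ^^ k) f \<in> VV d (m + k)"
  by (induction k) (simp_all add: Eop_VV)

lemma Fop_VV: "f \<in> VV d m \<Longrightarrow> Fop d f \<in> VV d (m - 1)"
  using Fop_homog'[of f m d] by (simp add: VV_def red_Fop)

lemma Fpow_VV: "f \<in> VV d m \<Longrightarrow> (Fop d ^^ k) f \<in> VV d (m - k)"
proof (induction k)
  case (Suc k)
  have "Fop d ((Fop d ^^ k) f) \<in> VV d (m - k - 1)" by (rule Fop_VV[OF Suc.IH[OF Suc.prems]])
  moreover have "m - k - 1 = m - Suc k" by simp
  ultimately show ?case by simp
qed simp

lemma Fpow_big: "f \<in> VV d m \<Longrightarrow> m < k \<Longrightarrow> (Fop d ^^ k) f = 0"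
proof -
  assume f: "f \<in> VV d m" and mk: "m < k"
  obtain k'' where "k = Suc (m + k'')" using mk less_iff_Suc_add by auto
  then have k: "k = k'' + Suc m" by simp
  have "(Fop d ^^ m) f \<in> VV d 0" using Fpow_VV[OF f, of m] by simp
  then have "Fop d ((Fop d ^^ m) f) = 0" by (simp add: VV_def Fop_homog0)
  then have "(Fop d ^^ Suc m) f = 0" by simp
  then show ?thesis unfolding k funpow_add comp_apply by simp
qed

lemma mdeg_box: "b \<in> box d \<Longrightarrow> mdeg b \<le> DD d"
  unfolding mdeg_sum DD_def box_def
proof (intro sum_mono)
  fix i assume "b \<in> {a. \<forall>i. Poly_Mapping.lookup a i < d i}"
  then have "Poly_Mapping.lookup b i < d i" by blast
  then show "Poly_Mapping.lookup b i \<le> d i - 1" by linarith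
qed

lemma VV_big: "f \<in> VV d m \<Longrightarrow> DD d < m \<Longrightarrow> f = 0"
  by (rule poly_mapping_eqI) (force simp: VV_def red_def homog_iff dest: mdeg_box)

lemma wt_int: "\<forall>i. 0 < d i \<Longrightarrow> (wt d m :: 'a::comm_ring_1) = of_int (2 * int m - int (DD d))"
  by (simp add: wt_def DD_def of_nat_diff Suc_leI)



lemma wt_add: "(wt d (m + k) :: 'a::comm_ring_1) = wt d m + 2 * of_nat k"
  by (simp add: wt_def algebra_simps)

lemma comm_pow:
  fixes v :: "('n::finite,'a::field) mpoly"
  assumes v: "v \<in> VV d m"
  shows "Fop d ((Eop d ^^ Suc j) v) = (Eop d ^^ Suc j) (Fop d v) - sm (of_nat (Suc j) * (wt d m + of_nat j)) ((Eop d ^^ j) v)"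
proof (induction j)
  case 0
  have c: "Eop d (Fop d v) - Fop d (Eop d v) = sm (wt d m) v"
    using v by (simp add: VV_def commutator)
  then show ?case by (simp add: algebra_simps)
next
  case (Suc j)
  let ?u = "(Eop d ^^ Suc j) v"
  have u: "?u \<in> VV d (m + Suc j)" using Epow_VV[OF v] .
  have c: "Eop d (Fop d ?u) - Fop d (Eop d ?u) = sm (wt d (m + Suc j)) ?u"
    using u by (simp add: VV_def commutator)
  then have "Fop d (Eop d ?u) = Eop d (Fop d ?u) - sm (wt d (m + Suc j)) ?u"
    by (simp add: algebra_simps)
  also have "Eop d (Fop d ?u) = (Eop d ^^ Suc (Suc j)) (Fop d v) - sm (of_nat (Suc j) * (wt d m + of_nat j)) ?u"
    unfolding Suc.IH by (simp add: Eop_diff Eop_sm)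
  finally have "Fop d (Eop d ?u) = (Eop d ^^ Suc (Suc j)) (Fop d v)
     - (sm (of_nat (Suc j) * (wt d m + of_nat j)) ?u + sm (wt d (m + Suc j)) ?u)"
    by (simp add: algebra_simps)
  also have "sm (of_nat (Suc j) * (wt d m + of_nat j)) ?u + sm (wt d (m + Suc j)) ?u
     = sm (of_nat (Suc (Suc j)) * (wt d m + of_nat (Suc j))) ?u"
    unfolding sm_add_scalar wt_add by (simp add: algebra_simps)
  finally show ?case by simp
qed

lemma inj_lem:
  fixes v :: "('n::finite,'a::field_char_0) mpoly"
  assumes dpos: "\<forall>i. 0 < d i"
  shows "v \<in> VV d m \<Longrightarrow> 2 * m + j \<le> DD d \<Longrightarrow> (Eop d ^^ j) v = 0 \<Longrightarrow> v = 0"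
proof (induction m arbitrary: j v rule: less_induct)
  case (less m)
  have "\<forall>v. v \<in> VV d m \<longrightarrow> 2 * m + j \<le> DD d \<longrightarrow> (Eop d ^^ j) v = (0::('n,'a) mpoly) \<longrightarrow> v = 0" for j
  proof (induction j)
    case (Suc j)
    show ?case
    proof (intro allI impI)
      fix v :: "('n,'a) mpoly"
      assume v: "v \<in> VV d m" and le: "2 * m + Suc j \<le> DD d" and z: "(Eop d ^^ Suc j) v = 0"
      define c where "c = (of_nat (Suc j) * (wt d m + of_nat j) :: 'a)"
      have "Fop d ((Eop d ^^ Suc j) v) = (Eop d ^^ Suc j) (Fop d v) - sm c ((Eop d ^^ j) v)"
        unfolding c_def by (rule comm_pow[OF v])
      then have h1: "(Eop d ^^ Suc j) (Fop d v) = sm c ((Eop d ^^ j) v)" using z by simp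
      have h2: "(Eop d ^^ Suc (Suc j)) (Fop d v) = 0"
      proof -
        have "(Eop d ^^ Suc (Suc j)) (Fop d v) = Eop d ((Eop d ^^ Suc j) (Fop d v))" by simp
        also have "\<dots> = sm c ((Eop d ^^ Suc j) v)" unfolding h1 by (simp add: Eop_sm)
        finally show ?thesis using z by simp
      qed
      have Fv: "Fop d v = 0"
      proof (cases m)
        case 0
        then show ?thesis using v by (simp add: VV_def Fop_homog0)
      next
        case (Suc m')
        have "Fop d v \<in> VV d m'" using Fop_VV[OF v] Suc by simp
        moreover have "2 * m' + Suc (Suc j) \<le> DD d" using le Suc by simp
        ultimately show ?thesis using less.IH[of m' "Fop d v" "Suc (Suc j)"] h2 Suc by simp
      qed
      have "sm c ((Eop d ^^ j) v) = 0" using h1 Fv by simp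
      moreover have "c \<noteq> 0"
      proof -
        have "c = of_nat (Suc j) * of_int (2 * int m - int (DD d) + int j)"
          unfolding c_def wt_int[OF dpos] by simp
        moreover have "2 * int m - int (DD d) + int j \<noteq> 0" using le by linarith
        then have "of_int (2 * int m - int (DD d) + int j) \<noteq> (0::'a)" by (simp only: of_int_eq_0_iff not_False_eq_True)
        moreover have "of_nat (Suc j) \<noteq> (0::'a)" by (simp only: of_nat_eq_0_iff nat.distinct simp_thms)
        ultimately show ?thesis by (metis mult_eq_0_iff)
      qed
      ultimately have "(Eop d ^^ j) v = 0" by (rule sm_eq0)
      then show "v = 0" using Suc.IH v le by simp
    qed
  qed simp
  then show ?case using less.prems by blast
qed

lemma hw:
  fixes u :: "('n::finite,'a::field) mpoly"
  assumes u: "u \<in> VV d m" and Eu: "Eop d u = 0"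
  shows "Eop d ((Fop d ^^ Suc t) u) = sm (of_nat (Suc t) * (wt d m - of_nat t)) ((Fop d ^^ t) u)"
proof (induction t)
  case 0
  have c: "Eop d (Fop d u) - Fop d (Eop d u) = sm (wt d m) u"
    using u by (simp add: VV_def commutator)
  then show ?case using Eu by simp
next
  case (Suc t)
  let ?z = "(Fop d ^^ Suc t) u"
  show ?case
  proof (cases "Suc t \<le> m")
    case True
    have z: "?z \<in> VV d (m - Suc t)" by (rule Fpow_VV[OF u])
    have c: "Eop d (Fop d ?z) - Fop d (Eop d ?z) = sm (wt d (m - Suc t)) ?z"
      using z by (simp add: VV_def commutator)
    have "Fop d (Eop d ?z) = sm (of_nat (Suc t) * (wt d m - of_nat t)) ?z"
      unfolding Suc.IH by (simp add: Fop_sm)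
    with c have "Eop d (Fop d ?z) = sm (of_nat (Suc t) * (wt d m - of_nat t)) ?z + sm (wt d (m - Suc t)) ?z"
      by (simp add: algebra_simps)
    also have "\<dots> = sm (of_nat (Suc t) * (wt d m - of_nat t) + wt d (m - Suc t)) ?z"
      by (rule sm_add_scalar)
    also have "wt d (m - Suc t) = (wt d m - 2 * of_nat (Suc t) :: 'a)"
      using wt_add[of d "m - Suc t" "Suc t", where 'a='a] True by simp
    finally show ?thesis by (simp add: algebra_simps)
  next
    case False
    then have "?z = 0" using Fpow_big[OF u, of "Suc t"] by simp
    moreover have "(Fop d ^^ Suc (Suc t)) u = 0" using Fpow_big[OF u, of "Suc (Suc t)"] False by simp
    ultimately show ?thesis by simp
  qed
qed

lemma hw_pow:
  fixes u :: "('n::finite,'a::field) mpoly"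
  assumes u: "u \<in> VV d m" and Eu: "Eop d u = 0"
  shows "(Eop d ^^ j) ((Fop d ^^ j) u) = sm (\<Prod>t<j. of_nat (Suc t) * (wt d m - of_nat t)) u"
proof (induction j)
  case (Suc j)
  have "(Eop d ^^ Suc j) ((Fop d ^^ Suc j) u) = (Eop d ^^ j) (Eop d ((Fop d ^^ Suc j) u))"
    by (simp only: funpow_Suc_right comp_apply)
  also have "\<dots> = sm (of_nat (Suc j) * (wt d m - of_nat j)) ((Eop d ^^ j) ((Fop d ^^ j) u))"
    unfolding hw[OF u Eu] by (rule Epow_sm)
  also have "\<dots> = sm (\<Prod>t<Suc j. of_nat (Suc t) * (wt d m - of_nat t)) u"
    unfolding Suc.IH by (simp add: algebra_simps)
  finally show ?case .
qed simp



lemma surj_aux: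
  fixes d :: "'n::finite \<Rightarrow> nat"
  assumes dpos: "\<forall>i. 0 < d i"
  shows "\<forall>m. DD d + 1 - m = t \<longrightarrow> (\<forall>j (u::('n,'a::field_char_0) mpoly). u \<in> VV d m \<longrightarrow> j + DD d \<le> 2 * m \<longrightarrow>
           (\<exists>y\<in>VV d (m - j). (Eop d ^^ j) y = u))"
proof (induction t)
  case 0
  show ?case
  proof (intro allI impI)
    fix m j and u :: "('n,'a) mpoly"
    assume "DD d + 1 - m = 0" "u \<in> VV d m"
    then have "u = 0" using VV_big[of u d m] by simp
    then show "\<exists>y\<in>VV d (m - j). (Eop d ^^ j) y = u" by (intro bexI[of _ 0]) simp_all
  qed
next
  case (Suc t)
  show ?case
  proof (intro allI impI)
    fix m j and u :: "('n,'a) mpoly"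
    assume mt: "DD d + 1 - m = Suc t" and u: "u \<in> VV d m" and jle: "j + DD d \<le> 2 * m"
    have mD: "m \<le> DD d" using mt by simp
    have jm: "j \<le> m" using mD jle by simp
    have "DD d + 1 - Suc m = t" using mt by simp
    moreover have "Eop d u \<in> VV d (Suc m)" by (rule Eop_VV[OF u])
    moreover have "Suc j + DD d \<le> 2 * Suc m" using jle by simp
    ultimately obtain y where y: "y \<in> VV d (Suc m - Suc j)" and Ey: "(Eop d ^^ Suc j) y = Eop d u"
      using Suc.IH by blast
    have y': "y \<in> VV d (m - j)" using y by simp
    define u' where "u' = u - (Eop d ^^ j) y"
    have "(Eop d ^^ j) y \<in> VV d (m - j + j)" by (rule Epow_VV[OF y'])
    then have "(Eop d ^^ j) y \<in> VV d m" using jm by simp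
    then have u'V: "u' \<in> VV d m" unfolding u'_def using u by (simp add: VV_diff)
    have Eu': "Eop d u' = 0" unfolding u'_def using Ey by (simp add: Eop_diff)
    define P where "P = (\<Prod>t<j. of_nat (Suc t) * (wt d m - of_nat t) :: 'a)"
    have hp: "(Eop d ^^ j) ((Fop d ^^ j) u') = sm P u'"
      unfolding P_def by (rule hw_pow[OF u'V Eu'])
    have P0: "P \<noteq> 0"
    proof -
      have "of_nat (Suc t) * (wt d m - of_nat t) \<noteq> (0::'a)" if "t < j" for t
      proof -
        have "wt d m - of_nat t = (of_int (2 * int m - int (DD d) - int t) :: 'a)"
          by (simp add: wt_int[OF dpos])
        moreover have "2 * int m - int (DD d) - int t \<noteq> 0" using that jle by linarith
        then have "of_int (2 * int m - int (DD d) - int t) \<noteq> (0::'a)" by (simp only: of_int_eq_0_iff not_False_eq_True)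
        moreover have "of_nat (Suc t) \<noteq> (0::'a)" by (simp only: of_nat_eq_0_iff nat.distinct simp_thms)
        ultimately show ?thesis by (metis mult_eq_0_iff)
      qed
      then show ?thesis unfolding P_def by (subst prod_zero_iff) auto
    qed
    define y2 where "y2 = sm (inverse P) ((Fop d ^^ j) u')"
    have y2V: "y2 \<in> VV d (m - j)" unfolding y2_def by (intro VV_sm Fpow_VV u'V)
    have Ey2: "(Eop d ^^ j) y2 = u'" unfolding y2_def Epow_sm hp using P0 by simp
    show "\<exists>y\<in>VV d (m - j). (Eop d ^^ j) y = u"
    proof (intro bexI[of _ "y + y2"])
      show "y + y2 \<in> VV d (m - j)" by (rule VV_add[OF y' y2V])
      show "(Eop d ^^ j) (y + y2) = u" unfolding Epow_add Ey2 u'_def by simp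
    qed
  qed
qed

lemma surj_lem:
  fixes d :: "'n::finite \<Rightarrow> nat" and u :: "('n,'a::field_char_0) mpoly"
  assumes dpos: "\<forall>i. 0 < d i" and u: "u \<in> VV d m" and jle: "j + DD d \<le> 2 * m"
  shows "\<exists>y\<in>VV d (m - j). (Eop d ^^ j) y = u"
  using surj_aux[OF dpos, of "DD d + 1 - m"] u jle by blast

lemma var_pow: "(var i :: ('n,'a::comm_ring_1) mpoly) ^ k = Poly_Mapping.single (Poly_Mapping.single i k) 1"
proof (induction k)
  case 0
  then show ?case by simp
next
  case (Suc k)
  then show ?case by (simp add: var_def mult_single single_add[symmetric])
qed

lemma poly_sum_single: "f = (\<Sum>a\<in>Poly_Mapping.keys f. Poly_Mapping.single a (Poly_Mapping.lookup f a))"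
proof (rule poly_mapping_eqI)
  fix b
  show "Poly_Mapping.lookup f b = Poly_Mapping.lookup (\<Sum>a\<in>Poly_Mapping.keys f. Poly_Mapping.single a (Poly_Mapping.lookup f a)) b"
    by (simp add: lookup_sum lookup_single when_def in_keys_iff)
qed

lemma ideal_imp:
  fixes f :: "('n::finite,'a::comm_ring_1) mpoly"
  assumes "f \<in> gen_ideal (\<lambda>i. var i ^ d i)"
  shows "trunc d f = 0"
proof -
  obtain c where f: "f = (\<Sum>i\<in>UNIV. c i * var i ^ d i)" using assms by (auto simp: gen_ideal_def)
  have "Poly_Mapping.lookup (c i * var i ^ d i) b = 0" if b: "b \<in> box d" for i b
  proof -
    have "Poly_Mapping.lookup (c i * var i ^ d i) b = (\<Sum>q. Poly_Mapping.lookup (c i) q when b = Poly_Mapping.single i (d i) + q)"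
      unfolding var_pow mult.commute[of "c i"] by (rule lookup_single_mult)
    also have "\<dots> = 0"
    proof -
      have hq: "(Poly_Mapping.lookup (c i) q when b = Poly_Mapping.single i (d i) + q) = 0" for q
      proof -
        have "b \<noteq> Poly_Mapping.single i (d i) + q"
        proof
          assume "b = Poly_Mapping.single i (d i) + q"
          then have "Poly_Mapping.lookup b i \<ge> d i" by (simp add: lookup_add)
          then show False using b by (auto simp: box_def not_le[symmetric])
        qed
        then show ?thesis by simp
      qed
      show ?thesis by (simp only: hq) simp
    qed
    finally show ?thesis by simp
  qed
  then show ?thesis
    by (intro poly_mapping_eqI) (simp add: trunc_def lookup_mk f lookup_sum)
qed

lemma imp_ideal:
  fixes f :: "('n::finite,'a::comm_ring_1) mpoly"
  assumes "trunc d f = 0"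
  shows "f \<in> gen_ideal (\<lambda>i. var i ^ d i)"
proof -
  have nb: "a \<notin> box d" if "a \<in> Poly_Mapping.keys f" for a
  proof
    assume "a \<in> box d"
    then have "Poly_Mapping.lookup (trunc d f) a = Poly_Mapping.lookup f a" by (simp add: trunc_def lookup_mk)
    then show False using assms that by (simp add: in_keys_iff)
  qed
  define ch where "ch a = (SOME i. d i \<le> Poly_Mapping.lookup a i)" for a :: "'n \<Rightarrow>\<^sub>0 nat"
  have ch: "d (ch a) \<le> Poly_Mapping.lookup a (ch a)" if "a \<in> Poly_Mapping.keys f" for a
  proof -
    have "\<exists>i. d i \<le> Poly_Mapping.lookup a i" using nb[OF that] by (auto simp: box_def not_less)
    then show ?thesis unfolding ch_def by (rule someI_ex)
  qed
  define c where "c i = (\<Sum>a\<in>Poly_Mapping.keys f. if ch a = i then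
       Poly_Mapping.single (a - Poly_Mapping.single i (d i)) (Poly_Mapping.lookup f a) else 0)" for i
  have ci: "c i * var i ^ d i = (\<Sum>a\<in>Poly_Mapping.keys f. if ch a = i then
       Poly_Mapping.single a (Poly_Mapping.lookup f a) else 0)" for i
    unfolding c_def sum_distrib_right
  proof (intro sum.cong refl)
    fix a assume a: "a \<in> Poly_Mapping.keys f"
    show "(if ch a = i then Poly_Mapping.single (a - Poly_Mapping.single i (d i)) (Poly_Mapping.lookup f a) else 0) * var i ^ d i =
       (if ch a = i then Poly_Mapping.single a (Poly_Mapping.lookup f a) else 0)"
    proof (cases "ch a = i")
      case True
      have "a - Poly_Mapping.single i (d i) + Poly_Mapping.single i (d i) = a"
        using ch[OF a] True
        by (intro poly_mapping_eqI) (auto simp: lookup_minus_single lookup_plus_single)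
      then show ?thesis using True by (simp add: var_pow mult_single)
    qed simp
  qed
  have "(\<Sum>i\<in>UNIV. c i * var i ^ d i) = (\<Sum>i\<in>UNIV. \<Sum>a\<in>Poly_Mapping.keys f. if ch a = i then
       Poly_Mapping.single a (Poly_Mapping.lookup f a) else 0)" by (simp only: ci)
  also have "\<dots> = (\<Sum>a\<in>Poly_Mapping.keys f. \<Sum>i\<in>UNIV. if ch a = i then
       Poly_Mapping.single a (Poly_Mapping.lookup f a) else 0)" by (rule sum.swap)
  also have "\<dots> = (\<Sum>a\<in>Poly_Mapping.keys f. Poly_Mapping.single a (Poly_Mapping.lookup f a))" by simp
  also have "\<dots> = f" by (rule poly_sum_single[symmetric])
  finally show ?thesis unfolding gen_ideal_def by auto
qed

lemma ideal_iff: "(f::('n::finite,'a::comm_ring_1) mpoly) \<in> gen_ideal (\<lambda>i. var i ^ d i) \<longleftrightarrow> trunc d f = 0"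
  using ideal_imp imp_ideal by blast

lemma ell_homog: "(\<Sum>i\<in>UNIV. var i :: ('n::finite,'a::comm_ring_1) mpoly) \<in> homog 1"
proof -
  have "Poly_Mapping.keys (\<Sum>i\<in>UNIV. var i :: ('n,'a) mpoly) \<subseteq> (\<Union>i\<in>UNIV. Poly_Mapping.keys (var i :: ('n,'a) mpoly))"
    by (rule keys_sum)
  also have "\<dots> \<subseteq> (\<Union>i. {Poly_Mapping.single i 1})" by (auto simp: var_def)
  finally have "Poly_Mapping.keys (\<Sum>i\<in>UNIV. var i :: ('n,'a) mpoly) \<subseteq> (\<Union>i. {Poly_Mapping.single i 1})" .
  moreover have "mdeg (Poly_Mapping.single (i::'n) (1::nat)) = 1" for i
    by (simp add: mdeg_sum lookup_single when_def)
  ultimately show ?thesis unfolding homog_def by blast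
qed



theorem mainTheorem14:
  fixes d :: "'n::finite \<Rightarrow> nat" and e :: nat
  assumes "\<forall>i. d i > 0" and "e > 0"
  shows "strong_lefschetz
           (colon (gen_ideal (\<lambda>i. (var i :: ('n, 'a::field_char_0) mpoly) ^ d i))
                  ((\<Sum>i\<in>UNIV. var i) ^ e))"
proof -
  have dpos: "\<forall>i. 0 < d i" using assms(1) by blast
  define G where "G = colon (gen_ideal (\<lambda>i. (var i :: ('n, 'a) mpoly) ^ d i)) ((\<Sum>i\<in>UNIV. var i) ^ e)"
  define l where "l = (\<Sum>i\<in>UNIV. var i :: ('n, 'a) mpoly)"
  have memG: "f \<in> G \<longleftrightarrow> (Eop d ^^ e) (trunc d f) = 0" for f
    unfolding G_def colon_def using trunc_ellpow[of d e f]
    by (simp add: ideal_iff mult.commute[of f])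
  have tl: "trunc d (l ^ j * f) = (Eop d ^^ j) (trunc d f)" for j f
    unfolding l_def by (rule trunc_ellpow)
  have tV: "f \<in> homog m \<Longrightarrow> trunc d f \<in> VV d m" for f m
    by (simp add: VV_def red_trunc trunc_homog)
  have "\<forall>i j. (\<forall>f\<in>homog i. l ^ j * f \<in> G \<longrightarrow> f \<in> G) \<or>
        (\<forall>g\<in>homog (i + j). \<exists>f\<in>homog i. g - l ^ j * f \<in> G)"
  proof (intro allI)
    fix i j
    show "(\<forall>f\<in>homog i. l ^ j * f \<in> G \<longrightarrow> f \<in> G) \<or>
        (\<forall>g\<in>homog (i + j). \<exists>f\<in>homog i. g - l ^ j * f \<in> G)"
    proof (cases "2 * i + (j + e) \<le> DD d")
      case True
      have "\<forall>f\<in>homog i. l ^ j * f \<in> G \<longrightarrow> f \<in> G"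
      proof (intro ballI impI)
        fix f :: "('n,'a) mpoly" assume f: "f \<in> homog i" and h: "l ^ j * f \<in> G"
        have "(Eop d ^^ e) ((Eop d ^^ j) (trunc d f)) = 0" using h memG tl by simp
        then have "(Eop d ^^ (j + e)) (trunc d f) = 0"
          by (simp add: funpow_add add.commute[of j e])
        then have "trunc d f = 0" using inj_lem[OF dpos tV[OF f] True] by simp
        then show "f \<in> G" using memG by simp
      qed
      then show ?thesis by blast
    next
      case False
      have "\<forall>g\<in>homog (i + j). \<exists>f\<in>homog i. g - l ^ j * f \<in> G"
      proof
        fix g :: "('n,'a) mpoly" assume g: "g \<in> homog (i + j)"
        define u where "u = (Eop d ^^ e) (trunc d g)"
        have uV: "u \<in> VV d (i + j + e)" unfolding u_def by (rule Epow_VV[OF tV[OF g]])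
        have "(j + e) + DD d \<le> 2 * (i + j + e)" using False by simp
        then obtain y where y: "y \<in> VV d (i + j + e - (j + e))" and Ey: "(Eop d ^^ (j + e)) y = u"
          using surj_lem[OF dpos uV] by blast
        have yi: "y \<in> VV d i" using y by simp
        have "(Eop d ^^ e) (trunc d (g - l ^ j * y)) = u - (Eop d ^^ e) ((Eop d ^^ j) (trunc d y))"
          unfolding trunc_diff Epow_diff tl u_def ..
        also have "trunc d y = y" using yi by (simp add: VV_def trunc_red)
        also have "(Eop d ^^ e) ((Eop d ^^ j) y) = (Eop d ^^ (j + e)) y"
          by (simp add: funpow_add add.commute[of j e])
        finally have "g - l ^ j * y \<in> G" using Ey memG by simp
        moreover have "y \<in> homog i" using yi by (simp add: VV_def)
        ultimately show "\<exists>f\<in>homog i. g - l ^ j * f \<in> G" by blast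
      qed
      then show ?thesis by blast
    qed
  qed
  moreover have "l \<in> homog 1" unfolding l_def by (rule ell_homog)
  ultimately have "strong_lefschetz G" unfolding strong_lefschetz_def by blast
  then show ?thesis unfolding G_def .
qed

end
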